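(* Let $\sigma\in\mathcal C_n(321)$ and $\tau\in\mathcal C_m(321)$ with $n,m\ge1$, and let $k$ be the index with $\hat\tau_k=1$. Define the word $$\hat\tau\odot\hat\sigma=(\hat\tau_1+n)\cdots(\hat\tau_k+n)\,\hat\sigma_1\hat\sigma_2\cdots\hat\sigma_n\,(\hat\tau_{k+1}+n)\cdots(\hat\tau_m+n)\in S_{n+m}.$$ Then $\theta^{-1}(\hat\tau\odot\hat\sigma)\in\mathcal C_{n+m}(321)$.
   Context: Permutations of $[n]$ are written in one-line notation. A permutation contains $321$ if there are $i<j<k$ with $\pi_i>\pi_j>\pi_k$. $\mathcal C_n$ is the set of cyclic permutations of $[n]$ (a single $n$-cycle), and $\mathcal C_n(321)$ those avoiding $321$. The standard cycle notation of $\pi$ writes each cycle with its largest element first, as $(m,\pi(m),\pi^2(m),\dots)$, and lists the cycles in increasing order of their largest elements. $\theta:S_n\to S_n$ sends $\pi$ to the permutation whose one-line notation is the standard cycle notation of $\pi$ with parentheses erased; $\hat\pi=\theta(\pi)$. *)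

theory Defs
  imports Main
begin

text \<open>Permutations of [n] are represented by their one-line notation: a list
  w of length n with w ! (i-1) = pi(i) for i in {1..n}.\<close>

definition is_perm :: "nat \<Rightarrow> nat list \<Rightarrow> bool" where
  "is_perm n w \<longleftrightarrow> length w = n \<and> distinct w \<and> set w = {1..n}"

definition perm_fun :: "nat list \<Rightarrow> nat \<Rightarrow> nat" where
  "perm_fun w i = w ! (i - 1)"

definition contains321 :: "nat list \<Rightarrow> bool" where
  "contains321 w \<longleftrightarrow> (\<exists>i j k. i < j \<and> j < k \<and> k < length w \<and> w ! i > w ! j \<and> w ! j > w ! k)"

text \<open>Cyclic permutation: a single n-cycle, i.e. the orbit of 1 is all of [n].\<close>
definition cyclic_perm :: "nat \<Rightarrow> nat list \<Rightarrow> bool" where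
  "cyclic_perm n w \<longleftrightarrow> is_perm n w \<and> {(perm_fun w ^^ k) 1 | k. True} = {1..n}"

definition Cyc :: "nat \<Rightarrow> nat list set" where
  "Cyc n = {w. cyclic_perm n w}"

definition Cyc321 :: "nat \<Rightarrow> nat list set" where
  "Cyc321 n = {w. cyclic_perm n w \<and> \<not> contains321 w}"

definition cycle_len :: "nat list \<Rightarrow> nat \<Rightarrow> nat" where
  "cycle_len w m = (LEAST k. 0 < k \<and> (perm_fun w ^^ k) m = m)"

definition cycle_list :: "nat list \<Rightarrow> nat \<Rightarrow> nat list" where
  "cycle_list w m = map (\<lambda>k. (perm_fun w ^^ k) m) [0..<cycle_len w m]"

definition cycle_maxima :: "nat list \<Rightarrow> nat set" where
  "cycle_maxima w = {m \<in> {1..length w}. \<forall>k. (perm_fun w ^^ k) m \<le> m}"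

text \<open>theta: standard cycle notation (each cycle starting with its largest
  element, cycles in increasing order of largest elements), parentheses erased.\<close>
definition theta :: "nat list \<Rightarrow> nat list" where
  "theta w = concat (map (cycle_list w) (sorted_list_of_set (cycle_maxima w)))"

end

theory Submission
  imports Defs
begin

lemma pf_range: assumes P: "is_perm N p" and x: "x \<in> {1..N}" shows "perm_fun p x \<in> {1..N}"
proof -
  from P have a: "length p = N" "set p = {1..N}" by (auto simp: is_perm_def)
  then have "x - 1 < length p" using x by auto
  then have "p ! (x - 1) \<in> set p" by (rule nth_mem)
  with a show ?thesis by (simp add: perm_fun_def)
qed

lemma pf_pow_range: "is_perm N p \<Longrightarrow> x \<in> {1..N} \<Longrightarrow> (perm_fun p ^^ j) x \<in> {1..N}"
proof (induction j)
  case 0 then show ?case by simp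
next
  case (Suc j) then show ?case using pf_range by simp
qed

lemma pf_inj: "is_perm N p \<Longrightarrow> inj_on (perm_fun p) {1..N}"
  unfolding inj_on_def
proof (intro ballI impI)
  fix x y assume P: "is_perm N p" and x: "x \<in> {1..N}" and y: "y \<in> {1..N}" and e: "perm_fun p x = perm_fun p y"
  from P have d: "distinct p" "length p = N" by (auto simp: is_perm_def)
  have "x - 1 = y - 1" using e x y d nth_eq_iff_index_eq[OF d(1), of "x-1" "y-1"] by (auto simp: perm_fun_def)
  then show "x = y" using x y by auto
qed
lemma pf_image: "is_perm N p \<Longrightarrow> perm_fun p ` {1..N} \<subseteq> {1..N}"
  using pf_range by blast

lemma pf_pow_inj: "is_perm N p \<Longrightarrow> inj_on (perm_fun p ^^ j) {1..N}"
proof (induction j)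
  case 0 then show ?case by simp
next
  case (Suc j)
  have "inj_on ((perm_fun p ^^ j) \<circ> perm_fun p) {1..N}"
    by (rule comp_inj_on[OF pf_inj[OF Suc.prems]]) (rule inj_on_subset[OF Suc.IH[OF Suc.prems] pf_image[OF Suc.prems]])
  then show ?case by (simp only: funpow_Suc_right)
qed

lemma pf_return: assumes P: "is_perm N p" and x: "x \<in> {1..N}"
  shows "\<exists>c>0. (perm_fun p ^^ c) x = x"
proof -
  let ?f = "perm_fun p"
  have "\<not> inj_on (\<lambda>i. (?f ^^ i) x) {0..N}"
  proof
    assume inj: "inj_on (\<lambda>i. (?f ^^ i) x) {0..N}"
    have "(\<lambda>i. (?f ^^ i) x) ` {0..N} \<subseteq> {1..N}" using pf_pow_range[OF P x] by blast
    then have "card ((\<lambda>i. (?f ^^ i) x) ` {0..N}) \<le> card {1..N}" by (intro card_mono) auto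
    then show False using card_image[OF inj] by simp
  qed
  then obtain a b where ab: "a \<le> N" "b \<le> N" "a \<noteq> b" "(?f ^^ a) x = (?f ^^ b) x"
    unfolding inj_on_def by auto
  then obtain a b where ab: "a < b" "(?f ^^ a) x = (?f ^^ b) x"
    by (metis nat_neq_iff)
  have "(?f ^^ b) x = (?f ^^ a) ((?f ^^ (b - a)) x)"
    using ab(1) by (metis add_diff_inverse_nat funpow_add less_imp_not_less o_apply)
  with ab have "(?f ^^ a) x = (?f ^^ a) ((?f ^^ (b - a)) x)" by simp
  then have "(?f ^^ (b - a)) x = x"
    using pf_pow_inj[OF P, of a] pf_pow_range[OF P x] x unfolding inj_on_def by metis
  then show ?thesis using ab(1) by (intro exI[of _ "b - a"]) auto
qed

lemma cl_pos: assumes P: "is_perm N p" and x: "x \<in> {1..N}"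
  shows "cycle_len p x > 0" "(perm_fun p ^^ cycle_len p x) x = x"
  using LeastI_ex[OF pf_return[OF P x]] unfolding cycle_len_def by auto

lemma pow_mult_fix: "(f ^^ c) x = x \<Longrightarrow> (f ^^ (c * q)) x = x"
proof (induction q)
  case 0 then show ?case by simp
next
  case (Suc q)
  have e: "c * Suc q = c * q + c" by simp
  have "(f ^^ (c * Suc q)) x = (f ^^ (c * q)) ((f ^^ c) x)"
    unfolding e by (simp only: funpow_add o_apply)
  then show ?case using Suc by simp
qed

lemma pow_mod: assumes "(f ^^ c) x = x" shows "(f ^^ j) x = (f ^^ (j mod c)) x"
proof -
  have "(f ^^ j) x = (f ^^ (j mod c)) ((f ^^ (c * (j div c))) x)"
    by (metis funpow_add mod_mult_div_eq o_apply)
  then show ?thesis using pow_mult_fix[OF assms] by simp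
qed

lemma cl_len: "length (cycle_list p x) = cycle_len p x"
  by (simp add: cycle_list_def)

lemma cl_nth: "i < cycle_len p x \<Longrightarrow> cycle_list p x ! i = (perm_fun p ^^ i) x"
  by (simp add: cycle_list_def)

lemma cl_distinct: assumes P: "is_perm N p" and x: "x \<in> {1..N}"
  shows "distinct (cycle_list p x)"
proof -
  let ?f = "perm_fun p"
  have "(?f ^^ i) x \<noteq> (?f ^^ j) x" if "i < j" "j < cycle_len p x" for i j
  proof
    assume eq: "(?f ^^ i) x = (?f ^^ j) x"
    have "(?f ^^ j) x = (?f ^^ i) ((?f ^^ (j - i)) x)"
      using that(1) by (metis add_diff_inverse_nat funpow_add less_imp_not_less o_apply)
    with eq have "(?f ^^ (j - i)) x = x"
      using pf_pow_inj[OF P, of i] pf_pow_range[OF P x] x unfolding inj_on_def by metis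
    moreover have "j - i < cycle_len p x" "0 < j - i" using that by auto
    ultimately show False using not_less_Least[of "j - i" "\<lambda>k. 0 < k \<and> (?f ^^ k) x = x"]
      unfolding cycle_len_def by auto
  qed
  then show ?thesis unfolding cycle_list_def distinct_conv_nth
    by simp (metis nat_neq_iff)
qed

lemma cl_set: assumes P: "is_perm N p" and x: "x \<in> {1..N}"
  shows "set (cycle_list p x) = {(perm_fun p ^^ j) x | j. True}"
proof -
  have "(perm_fun p ^^ j) x \<in> set (cycle_list p x)" for j
    using pow_mod[OF cl_pos(2)[OF P x], of j] cl_pos(1)[OF P x]
    unfolding cycle_list_def by auto
  then show ?thesis unfolding cycle_list_def by auto
qed

lemma cl_step: assumes P: "is_perm N p" and x: "x \<in> {1..N}" and i: "i < cycle_len p x"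
  shows "perm_fun p (cycle_list p x ! i) = cycle_list p x ! ((i + 1) mod cycle_len p x)"
proof -
  have "perm_fun p (cycle_list p x ! i) = (perm_fun p ^^ (i + 1)) x"
    using i by (simp add: cl_nth)
  also have "\<dots> = (perm_fun p ^^ ((i + 1) mod cycle_len p x)) x"
    by (rule pow_mod[OF cl_pos(2)[OF P x]])
  also have "\<dots> = cycle_list p x ! ((i + 1) mod cycle_len p x)"
    using cl_pos(1)[OF P x] by (simp add: cl_nth)
  finally show ?thesis .
qed

lemma reach_back: assumes P: "is_perm N p" and x: "x \<in> {1..N}"
  shows "\<exists>j. (perm_fun p ^^ j) ((perm_fun p ^^ a) x) = x"
proof -
  let ?c = "cycle_len p x"
  have "(perm_fun p ^^ (?c * a - a)) ((perm_fun p ^^ a) x) = (perm_fun p ^^ (?c * a)) x"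
    using cl_pos(1)[OF P x] by (simp add: funpow_add[symmetric, THEN fun_cong, simplified])
  then show ?thesis using pow_mult_fix[OF cl_pos(2)[OF P x]] by metis
qed


lemma cyc_reach: assumes P: "is_perm N p" and C: "cyclic_perm N p"
  and x: "x \<in> {1..N}" and y: "y \<in> {1..N}"
  shows "\<exists>j. (perm_fun p ^^ j) x = y"
proof -
  let ?f = "perm_fun p"
  have orb: "{(?f ^^ k) 1 | k. True} = {1..N}" using C by (simp add: cyclic_perm_def)
  obtain a where a: "x = (?f ^^ a) 1" using x orb by blast
  obtain b where b: "y = (?f ^^ b) 1" using y orb by blast
  have one: "1 \<in> {1..N}" using x by auto
  obtain j where j: "(?f ^^ j) x = 1" using reach_back[OF P one, of a] a by blast
  have "(?f ^^ (b + j)) x = (?f ^^ b) ((?f ^^ j) x)" by (simp only: funpow_add o_apply)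
  then show ?thesis using j b by metis
qed

lemma maxima_single: assumes P: "is_perm N p" and N: "1 \<le> N"
  and R: "\<forall>x\<in>{1..N}. \<exists>j. (perm_fun p ^^ j) x = N"
  shows "cycle_maxima p = {N}"
proof -
  have len: "length p = N" using P by (simp add: is_perm_def)
  have "N \<in> cycle_maxima p" using pf_pow_range[OF P, of N] N len
    unfolding cycle_maxima_def by auto
  moreover have "x = N" if "x \<in> cycle_maxima p" for x
  proof -
    have x: "x \<in> {1..N}" and le: "\<forall>k. (perm_fun p ^^ k) x \<le> x"
      using that len unfolding cycle_maxima_def by auto
    then obtain j where "(perm_fun p ^^ j) x = N" using R by blast
    then show ?thesis using le[rule_format, of j] x by auto
  qed
  ultimately show ?thesis by blast
qed

lemma theta_single: "cycle_maxima p = {N} \<Longrightarrow> theta p = cycle_list p N"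
  by (simp add: theta_def)

lemma cyc_theta: assumes P: "is_perm N p" and C: "cyclic_perm N p" and N: "1 \<le> N"
  shows "theta p = cycle_list p N" "cycle_len p N = N" "length (theta p) = N"
    "set (theta p) = {1..N}" "distinct (theta p)" "theta p ! 0 = N"
    "\<forall>i<N. perm_fun p (theta p ! i) = theta p ! ((i + 1) mod N)"
proof -
  have NN: "N \<in> {1..N}" using N by auto
  show th: "theta p = cycle_list p N"
    by (rule theta_single, rule maxima_single[OF P N]) (use cyc_reach[OF P C _ NN] in blast)
  have st: "set (cycle_list p N) = {1..N}"
    unfolding cl_set[OF P NN] using pf_pow_range[OF P NN] cyc_reach[OF P C NN] by blast
  have ds: "distinct (cycle_list p N)" by (rule cl_distinct[OF P NN])
  have "length (cycle_list p N) = N" using distinct_card[OF ds] st by simp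
  then show cl: "cycle_len p N = N" by (simp add: cl_len)
  show "length (theta p) = N" using th cl by (simp add: cl_len)
  show "set (theta p) = {1..N}" using th st by simp
  show "distinct (theta p)" using th ds by simp
  show "theta p ! 0 = N" using th cl N by (simp add: cl_nth)
  show "\<forall>i<N. perm_fun p (theta p ! i) = theta p ! ((i + 1) mod N)"
    using cl_step[OF P NN] th cl by simp
qed


lemma conv_theta: assumes P: "is_perm N p" and N: "1 \<le> N" and h: "theta p ! 0 = N"
  shows "theta p = cycle_list p N"
proof -
  let ?M = "cycle_maxima p"
  have len: "length p = N" using P by (simp add: is_perm_def)
  have fin: "finite ?M" unfolding cycle_maxima_def by auto
  have NM: "N \<in> ?M" using pf_pow_range[OF P, of N] N len
    unfolding cycle_maxima_def by auto
  have sub: "?M \<subseteq> {1..N}" using len unfolding cycle_maxima_def by auto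
  have ne: "?M \<noteq> {}" using NM by blast
  have mi: "Min ?M \<in> {1..N}" using Min_in[OF fin ne] sub by blast
  have "theta p = cycle_list p (Min ?M) @ concat (map (cycle_list p) (sorted_list_of_set (?M - {Min ?M})))"
    unfolding theta_def sorted_list_of_set_nonempty[OF fin ne] by simp
  then have "theta p ! 0 = cycle_list p (Min ?M) ! 0"
    using cl_pos(1)[OF P mi] by (simp add: nth_append cl_len)
  also have "\<dots> = Min ?M" using cl_pos(1)[OF P mi] by (simp add: cl_nth)
  finally have "Min ?M = N" using h by simp
  then have "?M = {N}" using sub NM fin Min_le[OF fin] by fastforce
  then show ?thesis by (rule theta_single)
qed


lemma constr_theta: assumes P: "is_perm N p" and N: "1 \<le> N"
  and lw: "length w = N" and sw: "set w = {1..N}" and w0: "w ! 0 = N"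
  and step: "\<forall>i<N. perm_fun p (w ! i) = w ! ((i + 1) mod N)"
  shows "theta p = w" "cyclic_perm N p"
proof -
  let ?f = "perm_fun p"
  have dw: "distinct w" using card_distinct[of w] lw sw by simp
  have it: "\<forall>a<N. (?f ^^ j) (w ! a) = w ! ((a + j) mod N)" for j
  proof (induction j)
    case 0 then show ?case by simp
  next
    case (Suc j)
    show ?case
    proof (intro allI impI)
      fix a assume a: "a < N"
      have "(?f ^^ Suc j) (w ! a) = ?f (w ! ((a + j) mod N))" using Suc a by simp
      also have "\<dots> = w ! (((a + j) mod N + 1) mod N)" by (rule step[rule_format]) (use N in simp)
      also have "((a + j) mod N + 1) mod N = (a + Suc j) mod N" using mod_add_left_eq[of "a+j" N 1] by simp
      finally show "(?f ^^ Suc j) (w ! a) = w ! ((a + Suc j) mod N)" .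
    qed
  qed
  have R: "\<forall>x\<in>{1..N}. \<exists>j. (?f ^^ j) x = N"
  proof
    fix x assume "x \<in> {1..N}"
    then have "x \<in> set w" using sw by simp
    then obtain a where a: "a < N" "x = w ! a" using lw by (auto simp: in_set_conv_nth)
    have "(?f ^^ (N - a)) x = w ! ((a + (N - a)) mod N)" using it a by simp
    also have "\<dots> = N" using a w0 by simp
    finally show "\<exists>j. (?f ^^ j) x = N" by blast
  qed
  have th: "theta p = cycle_list p N" by (rule theta_single, rule maxima_single[OF P N R])
  have pw: "(?f ^^ j) N = w ! (j mod N)" for j
  proof -
    have "(?f ^^ j) (w ! 0) = w ! ((0 + j) mod N)" using it[of j] N by simp
    then show ?thesis using w0 by simp
  qed
  have cl: "cycle_len p N = N" unfolding cycle_len_def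
  proof (rule Least_equality)
    show "0 < N \<and> (?f ^^ N) N = N" using pw[of N] N w0 by simp
  next
    fix y assume y: "0 < y \<and> (?f ^^ y) N = N"
    show "N \<le> y"
    proof (rule ccontr)
      assume "\<not> N \<le> y"
      then have "w ! y = w ! 0" using y pw[of y] w0 by simp
      then show False using y \<open>\<not> N \<le> y\<close> nth_eq_iff_index_eq[OF dw, of y 0] lw by simp
    qed
  qed
  have "cycle_list p N = w" unfolding cycle_list_def cl
  proof (rule nth_equalityI)
    show "length (map (\<lambda>k. (?f ^^ k) N) [0..<N]) = length w" using lw by simp
    fix i assume "i < length (map (\<lambda>k. (?f ^^ k) N) [0..<N])"
    then have i: "i < N" by simp
    have "(?f ^^ i) N = w ! (i mod N)" by (rule pw)
    then show "map (\<lambda>k. (?f ^^ k) N) [0..<N] ! i = w ! i" using i by simp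
  qed
  then show "theta p = w" using th by simp
  show "cyclic_perm N p" unfolding cyclic_perm_def
  proof (intro conjI P)
    have "1 \<in> set w" using sw N by simp
    then obtain a where a: "a < N" "w ! a = 1" using lw by (auto simp: in_set_conv_nth)
    show "{(?f ^^ k) 1 |k. True} = {1..N}"
    proof
      show "{(?f ^^ k) 1 |k. True} \<subseteq> {1..N}" using pf_pow_range[OF P, of 1] N by auto
      show "{1..N} \<subseteq> {(?f ^^ k) 1 |k. True}"
      proof
        fix y assume "y \<in> {1..N}"
        then have "y \<in> set w" using sw by simp
        then obtain b where b: "b < N" "y = w ! b" using lw by (auto simp: in_set_conv_nth)
        have "(?f ^^ (b + N - a)) (w ! a) = w ! ((a + (b + N - a)) mod N)" using it a(1) by blast
        then have "(?f ^^ (b + N - a)) 1 = w ! ((a + (b + N - a)) mod N)" using a(2) by simp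
        also have "(a + (b + N - a)) mod N = b" using a b by simp
        finally have "(?f ^^ (b + N - a)) 1 = y" using b by simp
        then show "y \<in> {(?f ^^ k) 1 |k. True}" by blast
      qed
    qed
  qed
qed



definition mkP :: "nat \<Rightarrow> nat list \<Rightarrow> nat list \<Rightarrow> nat list" where
  "mkP n \<sigma> \<tau> = map (\<lambda>q. if q < n then (if \<sigma> ! q = n then \<tau> ! 0 + n else \<sigma> ! q)
      else if q = n then n else \<tau> ! (q - n) + n) [0..<n + length \<tau>]"

lemma mkP_nth: "q < n + length \<tau> \<Longrightarrow> mkP n \<sigma> \<tau> ! q = (if q < n then (if \<sigma> ! q = n then \<tau> ! 0 + n else \<sigma> ! q)
      else if q = n then n else \<tau> ! (q - n) + n)"
  unfolding mkP_def by (simp del: upt_Suc)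

lemma mkP_len: "length (mkP n \<sigma> \<tau>) = n + length \<tau>"
  unfolding mkP_def by simp

lemma w_nth: assumes "length S = n" "length T = m" "k \<le> m" "i < n + m"
  shows "(map (\<lambda>x. x + n) (take k T) @ S @ map (\<lambda>x. x + n) (drop k T)) ! i =
    (if i < k then T ! i + n else if i < k + n then S ! (i - k) else T ! (i - n) + n)"
  using assms by (auto simp: nth_append min_def)

lemma step_lemma:
  assumes n: "1 \<le> n" and m: "1 \<le> m" and k: "1 \<le> k" "k \<le> m"
    and lS: "length S = n" and lT: "length T = m" and dS: "distinct S" and dT: "distinct T"
    and S0: "S ! 0 = n" and T0: "T ! 0 = m" and Tk: "T ! (k - 1) = 1"
    and sS: "set S = {1..n}" and sT: "set T = {1..m}"
    and ls: "length \<sigma> = n" and lt: "length \<tau> = m"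
    and gS: "\<forall>i<n. \<sigma> ! (S ! i - 1) = S ! ((i + 1) mod n)"
    and hT: "\<forall>i<m. \<tau> ! (T ! i - 1) = T ! ((i + 1) mod m)"
    and w: "w = map (\<lambda>x. x + n) (take k T) @ S @ map (\<lambda>x. x + n) (drop k T)"
    and i: "i < n + m"
  shows "mkP n \<sigma> \<tau> ! (w ! i - 1) = w ! ((i + 1) mod (n + m))"
proof -
  let ?P = "mkP n \<sigma> \<tau>"
  have wi: "w ! j = (if j < k then T ! j + n else if j < k + n then S ! (j - k) else T ! (j - n) + n)"
    if "j < n + m" for j using w_nth[OF lS lT k(2) that] w by simp
  have Tr: "T ! j \<in> {1..m}" if "j < m" for j using nth_mem[of j T] that lT sT by auto
  have Sr: "S ! j \<in> {1..n}" if "j < n" for j using nth_mem[of j S] that lS sS by auto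
  have Tne: "T ! j \<noteq> 1" if "j < m" "j \<noteq> k - 1" for j
    using nth_eq_iff_index_eq[OF dT, of j "k - 1"] that k lT Tk by auto
  have Sne: "S ! j \<noteq> n" if "j < n" "j \<noteq> 0" for j
    using nth_eq_iff_index_eq[OF dS, of j 0] that n lS S0 by auto
  have Pq: "?P ! q = (if q < n then (if \<sigma> ! q = n then \<tau> ! 0 + n else \<sigma> ! q)
      else if q = n then n else \<tau> ! (q - n) + n)" if "q < n + m" for q
    using mkP_nth[of q n \<tau> \<sigma>] that lt by simp
  have tau0: "\<tau> ! 0 = T ! (k mod m)"
    using hT[rule_format, of "k - 1"] k Tk by simp
  consider (a) "i < k - 1" | (b) "i = k - 1" | (c) "k \<le> i" "i < k + n - 1" | (d) "i = k + n - 1" | (e) "k + n \<le> i"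
    by linarith
  then show ?thesis
  proof cases
    case a
    have ik: "i < k" using a by simp
    have x: "w ! i = T ! i + n" using wi[of i] ik i by simp
    have T1: "T ! i \<in> {1..m}" "T ! i \<noteq> 1" using Tr[of i] Tne[of i] a k by auto
    have "?P ! (w ! i - 1) = \<tau> ! (T ! i - 1) + n" using Pq[of "T ! i + n - 1"] x T1 by auto
    also have "\<dots> = T ! (i + 1) + n" using hT[rule_format, of i] a k by simp
    also have "\<dots> = w ! ((i + 1) mod (n + m))"
    proof -
      have "i + 1 < k" "i + 1 < n + m" using a k by linarith+
      then show ?thesis using wi[of "i + 1"] by simp
    qed
    finally show ?thesis .
  next
    case b
    have x: "w ! i = n + 1" using wi[of i] b i Tk k by simp
    have "?P ! (w ! i - 1) = n" using Pq[of n] x m by simp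
    also have "\<dots> = w ! ((i + 1) mod (n + m))" using wi[of "i + 1"] b k n S0 by simp
    finally show ?thesis .
  next
    case c
    have ikn: "i < k + n" "i + 1 < k + n" "i + 1 < n + m" using c k by linarith+
    have x: "w ! i = S ! (i - k)" using wi[of i] c i ikn by simp
    have S1: "S ! (i - k) \<in> {1..n}" using Sr[of "i - k"] c by auto
    have g: "\<sigma> ! (S ! (i - k) - 1) = S ! (i - k + 1)" using gS[rule_format, of "i - k"] c by simp
    have ne: "S ! (i - k + 1) \<noteq> n" using Sne[of "i - k + 1"] c by simp
    have "?P ! (w ! i - 1) = S ! (i - k + 1)" using Pq[of "S ! (i - k) - 1"] x S1 g ne by auto
    also have "\<dots> = w ! ((i + 1) mod (n + m))" using wi[of "i + 1"] c ikn
      by (simp add: Suc_diff_le)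
    finally show ?thesis .
  next
    case d
    have dd: "\<not> i < k" "i < k + n" "i - k = n - 1" "i + 1 = k + n" using d n by linarith+
    have x: "w ! i = S ! (n - 1)" using wi[of i] dd i by simp
    have S1: "S ! (n - 1) \<in> {1..n}" using Sr[of "n - 1"] n by auto
    have g: "\<sigma> ! (S ! (n - 1) - 1) = n" using gS[rule_format, of "n - 1"] n S0 by simp
    have "?P ! (w ! i - 1) = \<tau> ! 0 + n" using Pq[of "S ! (n - 1) - 1"] x S1 g by auto
    also have "\<dots> = w ! ((i + 1) mod (n + m))"
    proof (cases "k < m")
      case True
      have "w ! (i + 1) = T ! k + n" using wi[of "i + 1"] dd True by simp
      then show ?thesis using dd True tau0 by simp
    next
      case False
      then have "k = m" using k by simp
      have "w ! 0 = T ! 0 + n" using wi[of 0] k n by simp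
      moreover have "(i + 1) mod (n + m) = 0" using dd \<open>k = m\<close> by (simp add: add.commute)
      ultimately show ?thesis using \<open>k = m\<close> tau0 by simp
    qed
    finally show ?thesis .
  next
    case e
    have x: "w ! i = T ! (i - n) + n" using wi[of i] e i by simp
    have T1: "T ! (i - n) \<in> {1..m}" "T ! (i - n) \<noteq> 1" using Tr[of "i - n"] Tne[of "i - n"] e i k by auto
    have "?P ! (w ! i - 1) = \<tau> ! (T ! (i - n) - 1) + n" using Pq[of "T ! (i - n) + n - 1"] x T1 i by auto
    also have "\<dots> = T ! ((i - n + 1) mod m) + n" using hT[rule_format, of "i - n"] e i by simp
    also have "\<dots> = w ! ((i + 1) mod (n + m))"
    proof (cases "i + 1 < n + m")
      case True
      then show ?thesis using wi[of "i + 1"] e by (simp add: Suc_diff_le)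
    next
      case False
      then have "i + 1 = n + m" using i by simp
      then have "i - n + 1 = m" using e by linarith
      then have "(i - n + 1) mod m = 0" "(i + 1) mod (n + m) = 0" using \<open>i + 1 = n + m\<close> by simp_all
      then show ?thesis using wi[of 0] k T0 by simp
    qed
    finally show ?thesis .
  qed
qed



lemma no321_mkP:
  assumes ps: "is_perm n \<sigma>" and ns: "\<not> contains321 \<sigma>"
    and pt: "is_perm m \<tau>" and nt: "\<not> contains321 \<tau>" and m1: "1 \<le> m"
  shows "\<not> contains321 (mkP n \<sigma> \<tau>)"
proof
  assume "contains321 (mkP n \<sigma> \<tau>)"
  then obtain i j l where ijl: "i < j" "j < l" "l < n + m"
    and v1: "mkP n \<sigma> \<tau> ! i > mkP n \<sigma> \<tau> ! j" and v2: "mkP n \<sigma> \<tau> ! j > mkP n \<sigma> \<tau> ! l"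
    using pt unfolding contains321_def by (auto simp: mkP_len is_perm_def)
  have ls: "length \<sigma> = n" "distinct \<sigma>" "set \<sigma> = {1..n}" using ps by (auto simp: is_perm_def)
  have lt: "length \<tau> = m" "set \<tau> = {1..m}" using pt by (auto simp: is_perm_def)
  have Pq: "mkP n \<sigma> \<tau> ! q = (if q < n then (if \<sigma> ! q = n then \<tau> ! 0 + n else \<sigma> ! q)
      else if q = n then n else \<tau> ! (q - n) + n)" if "q < n + m" for q
    using mkP_nth[of q n \<tau> \<sigma>] that lt by simp
  have sr: "\<sigma> ! q \<in> {1..n}" if "q < n" for q using nth_mem[of q \<sigma>] that ls by auto
  have tr: "\<tau> ! q \<in> {1..m}" if "q < m" for q using nth_mem[of q \<tau>] that lt by auto
  have sd: "\<sigma> ! q \<noteq> \<sigma> ! q'" if "q < n" "q' < n" "q \<noteq> q'" for q q'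
    using nth_eq_iff_index_eq[OF ls(2), of q q'] that ls by auto
  have noS: "\<not> (\<sigma> ! a > \<sigma> ! b \<and> \<sigma> ! b > \<sigma> ! c)" if "a < b" "b < c" "c < n" for a b c
    using ns that ls unfolding contains321_def by blast
  have noT: "\<not> (\<tau> ! a > \<tau> ! b \<and> \<tau> ! b > \<tau> ! c)" if "a < b" "b < c" "c < m" for a b c
    using nt that lt unfolding contains321_def by blast
  have t0: "\<tau> ! 0 \<ge> 1" using tr[of 0] m1 by auto
  have small: "mkP n \<sigma> \<tau> ! q < n" if "q < n" "\<sigma> ! q \<noteq> n" for q
    using Pq[of q] sr[of q] that by auto
  have bigv: "mkP n \<sigma> \<tau> ! q = \<tau> ! 0 + n" if "q < n" "\<sigma> ! q = n" for q
    using Pq[of q] that by auto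
  have midv: "mkP n \<sigma> \<tau> ! n = n" using Pq[of n] m1 by simp
  have highv: "mkP n \<sigma> \<tau> ! q = \<tau> ! (q - n) + n" "\<tau> ! (q - n) \<ge> 1" if "n < q" "q < n + m" for q
    using Pq[of q] tr[of "q - n"] that by auto
  consider (A) "l < n" | (B) "l = n" | (C) "n < l" by linarith
  then show False
  proof cases
    case A
    then have jn: "j < n" "i < n" using ijl by auto
    show False
    proof (cases "\<sigma> ! l = n")
      case True
      have "\<sigma> ! j = n"
      proof (rule ccontr)
        assume "\<sigma> ! j \<noteq> n"
        then show False using small[OF jn(1)] bigv[OF A True] v2 by simp
      qed
      then show False using sd[of j l] jn A ijl True by simp
    next
      case lnb: False
      show False
      proof (cases "\<sigma> ! j = n")
        case True
        have "\<sigma> ! i = n"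
        proof (rule ccontr)
          assume "\<sigma> ! i \<noteq> n"
          then show False using small[OF jn(2)] bigv[OF jn(1) True] v1 by simp
        qed
        then show False using sd[of i j] jn ijl True by simp
      next
        case jnb: False
        have e2: "mkP n \<sigma> \<tau> ! j = \<sigma> ! j" "mkP n \<sigma> \<tau> ! l = \<sigma> ! l"
          using Pq[of j] Pq[of l] jn A jnb lnb ijl by auto
        have "\<sigma> ! i > \<sigma> ! j"
        proof (cases "\<sigma> ! i = n")
          case True then show ?thesis using sr[of j] jn jnb by auto
        next
          case False then show ?thesis using Pq[of i] jn ijl e2 v1 by auto
        qed
        then show False using noS[of i j l] ijl A e2 v2 by simp
      qed
    qed
  next
    case B
    then have jn: "j < n" "i < n" using ijl by auto
    have "\<sigma> ! j = n"
    proof (rule ccontr)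
      assume "\<sigma> ! j \<noteq> n"
      then show False using small[OF jn(1)] midv B v2 by simp
    qed
    moreover have "\<sigma> ! i = n"
    proof (rule ccontr)
      assume "\<sigma> ! i \<noteq> n"
      then show False using small[OF jn(2)] bigv[OF jn(1) \<open>\<sigma> ! j = n\<close>] v1 by simp
    qed
    ultimately show False using sd[of i j] jn ijl by simp
  next
    case C
    have lv: "mkP n \<sigma> \<tau> ! l > n" using highv[OF C ijl(3)] by simp
    consider (j1) "j < n" | (j2) "j = n" | (j3) "n < j" by linarith
    then show False
    proof cases
      case j1
      have "\<sigma> ! j = n"
      proof (rule ccontr)
        assume "\<sigma> ! j \<noteq> n"
        then show False using small[OF j1] lv v2 by simp
      qed
      moreover have "\<sigma> ! i = n"
      proof (rule ccontr)
        assume "\<sigma> ! i \<noteq> n"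
        then show False using small[of i] j1 ijl bigv[OF j1 \<open>\<sigma> ! j = n\<close>] v1 by simp
      qed
      ultimately show False using sd[of i j] j1 ijl by simp
    next
      case j2
      then show False using midv lv v2 by simp
    next
      case j3
      have jv: "mkP n \<sigma> \<tau> ! j = \<tau> ! (j - n) + n" "\<tau> ! (j - n) \<ge> 1" using highv[OF j3] ijl by auto
      have lv': "mkP n \<sigma> \<tau> ! l = \<tau> ! (l - n) + n" using highv[OF C ijl(3)] by simp
      have T2: "\<tau> ! (j - n) > \<tau> ! (l - n)" using jv lv' v2 by simp
      consider (i1) "i < n" | (i2) "i = n" | (i3) "n < i" by linarith
      then show False
      proof cases
        case i1
        show False
        proof (cases "\<sigma> ! i = n")
          case True
          have "\<tau> ! 0 > \<tau> ! (j - n)" using bigv[OF i1 True] jv v1 by simp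
          moreover have "0 < j - n" "j - n < l - n" "l - n < m" using j3 C ijl by linarith+
          ultimately show False using noT[of 0 "j - n" "l - n"] T2 by blast
        next
          case False
          then show False using small[OF i1] jv v1 by simp
        qed
      next
        case i2 then show False using midv jv v1 by simp
      next
        case i3
        have "\<tau> ! (i - n) > \<tau> ! (j - n)" using highv[OF i3] ijl jv v1 by simp
        moreover have "i - n < j - n" "j - n < l - n" "l - n < m" using i3 C ijl by linarith+
        ultimately show False using noT[of "i - n" "j - n" "l - n"] T2 by blast
      qed
    qed
  qed
qed



theorem mainTheorem7:
  fixes \<sigma> \<tau> :: "nat list" and n m k :: nat
  assumes "1 \<le> n" and "1 \<le> m"
    and "\<sigma> \<in> Cyc321 n" and "\<tau> \<in> Cyc321 m"
    and "1 \<le> k" and "k \<le> m" and "theta \<tau> ! (k - 1) = 1"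
  defines "w \<equiv> map (\<lambda>x. x + n) (take k (theta \<tau>)) @ theta \<sigma> @ map (\<lambda>x. x + n) (drop k (theta \<tau>))"
  shows "(\<exists>\<pi>. is_perm (n + m) \<pi> \<and> theta \<pi> = w)
       \<and> (\<forall>\<pi>. is_perm (n + m) \<pi> \<and> theta \<pi> = w \<longrightarrow> \<pi> \<in> Cyc321 (n + m))"
proof -
  note n = assms(1) and m = assms(2) and k = assms(5,6) and Tk = assms(7)
  have cs: "cyclic_perm n \<sigma>" and ns: "\<not> contains321 \<sigma>" using assms(3) by (auto simp: Cyc321_def)
  have ct: "cyclic_perm m \<tau>" and nt: "\<not> contains321 \<tau>" using assms(4) by (auto simp: Cyc321_def)
  have ps: "is_perm n \<sigma>" using cs by (simp add: cyclic_perm_def)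
  have pt: "is_perm m \<tau>" using ct by (simp add: cyclic_perm_def)
  define S where "S = theta \<sigma>"
  define T where "T = theta \<tau>"
  define N where "N = n + m"
  define P where "P = mkP n \<sigma> \<tau>"
  have S: "length S = n" "set S = {1..n}" "distinct S" "S ! 0 = n"
    "\<forall>i<n. perm_fun \<sigma> (S ! i) = S ! ((i + 1) mod n)"
    using cyc_theta[OF ps cs n] unfolding S_def by auto
  have T: "length T = m" "set T = {1..m}" "distinct T" "T ! 0 = m"
    "\<forall>i<m. perm_fun \<tau> (T ! i) = T ! ((i + 1) mod m)"
    using cyc_theta[OF pt ct m] unfolding T_def by auto
  have ls: "length \<sigma> = n" using ps by (simp add: is_perm_def)
  have lt: "length \<tau> = m" using pt by (simp add: is_perm_def)
  have wdef: "w = map (\<lambda>x. x + n) (take k T) @ S @ map (\<lambda>x. x + n) (drop k T)"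
    unfolding w_def S_def T_def ..
  have gS: "\<forall>i<n. \<sigma> ! (S ! i - 1) = S ! ((i + 1) mod n)" using S(5) by (simp add: perm_fun_def)
  have hT: "\<forall>i<m. \<tau> ! (T ! i - 1) = T ! ((i + 1) mod m)" using T(5) by (simp add: perm_fun_def)
  have Tk': "T ! (k - 1) = 1" using Tk T_def by simp
  have stepP: "P ! (w ! i - 1) = w ! ((i + 1) mod N)" if "i < N" for i
    unfolding P_def N_def
    by (rule step_lemma[OF n m k S(1) T(1) S(3) T(3) S(4) T(4) Tk' S(2) T(2) ls lt gS hT wdef])
      (use that N_def in simp)
  have lw: "length w = N" using wdef S(1) T(1) k N_def by simp
  have sw: "set w = {1..N}"
  proof -
    have "set w = set S \<union> (\<lambda>x. x + n) ` (set (take k T) \<union> set (drop k T))"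
      using wdef by auto
    also have "set (take k T) \<union> set (drop k T) = set T"
      using set_append[of "take k T" "drop k T"] by simp
    finally have "set w = {1..n} \<union> (\<lambda>x. x + n) ` {1..m}" using S(2) T(2) by simp
    also have "\<dots> = {1..N}" unfolding N_def
    proof -
      have "(\<lambda>x. x + n) ` {1..m} = {n+1..n+m}"
        by (simp add: image_add_atLeastAtMost add.commute)
      then show "{1..n} \<union> (\<lambda>x. x + n) ` {1..m} = {1..n + m}" using n by auto
    qed
    finally show ?thesis .
  qed
  have w0: "w ! 0 = N" using w_nth[OF S(1) T(1) k(2), of 0] wdef k T(4) n m N_def by simp
  have N1: "1 \<le> N" using n N_def by simp
  have lP: "length P = N" using mkP_len lt P_def N_def by simp
  have wr: "w ! i \<in> {1..N}" if "i < N" for i using nth_mem[of i w] that lw sw by auto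
  have inw: "\<exists>i<N. w ! i = x" if "x \<in> {1..N}" for x
  proof -
    have "x \<in> set w" using that sw by simp
    then show ?thesis using lw by (auto simp: in_set_conv_nth)
  qed
  have setP: "set P = {1..N}"
  proof
    show "set P \<subseteq> {1..N}"
    proof
      fix y assume "y \<in> set P"
      then obtain q where q: "q < N" "y = P ! q" using lP by (auto simp: in_set_conv_nth)
      then have "q + 1 \<in> {1..N}" by simp
      then obtain i where i: "i < N" "w ! i = q + 1" using inw by blast
      have "y = w ! ((i + 1) mod N)" using stepP[OF i(1)] i q by simp
      then show "y \<in> {1..N}" using wr[of "(i + 1) mod N"] N1 by simp
    qed
    show "{1..N} \<subseteq> set P"
    proof
      fix y assume "y \<in> {1..N}"
      then obtain j where j: "j < N" "w ! j = y" using inw by blast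
      define i where "i = (j + N - 1) mod N"
      have i: "i < N" using N1 i_def by simp
      have "(i + 1) mod N = (j + N - 1 + 1) mod N" unfolding i_def by (rule mod_add_left_eq)
      also have "j + N - 1 + 1 = j + N" using N1 by simp
      finally have "(i + 1) mod N = j" using j by simp
      then have "P ! (w ! i - 1) = y" using stepP[OF i] j by simp
      moreover have "w ! i - 1 < N" using wr[OF i] by auto
      then have "P ! (w ! i - 1) \<in> set P" using lP by simp
      ultimately show "y \<in> set P" by simp
    qed
  qed
  have pP: "is_perm N P" unfolding is_perm_def using lP setP card_distinct[of P] by simp
  have stepP': "\<forall>i<N. perm_fun P (w ! i) = w ! ((i + 1) mod N)"
    using stepP by (simp add: perm_fun_def)
  have thP: "theta P = w" and cP: "cyclic_perm N P"
    using constr_theta[OF pP N1 lw sw w0 stepP'] by auto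
  have nP: "\<not> contains321 P" unfolding P_def by (rule no321_mkP[OF ps ns pt nt m])
  have uniq: "\<pi> = P" if pp: "is_perm N \<pi>" and tp: "theta \<pi> = w" for \<pi>
  proof -
    have NN: "N \<in> {1..N}" using N1 by simp
    have th: "theta \<pi> = cycle_list \<pi> N" by (rule conv_theta[OF pp N1]) (use tp w0 in simp)
    have cl: "cycle_len \<pi> N = N" using th tp lw cl_len[of \<pi> N] by simp
    have st: "\<forall>i<N. perm_fun \<pi> (w ! i) = w ! ((i + 1) mod N)"
      using cl_step[OF pp NN] th tp cl by simp
    have lpi: "length \<pi> = N" using pp by (simp add: is_perm_def)
    show ?thesis
    proof (rule nth_equalityI)
      show "length \<pi> = length P" using lpi lP by simp
      fix q assume "q < length \<pi>"
      then have "q + 1 \<in> {1..N}" using lpi by simp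
      then obtain i where i: "i < N" "w ! i = q + 1" using inw by blast
      have "\<pi> ! q = perm_fun \<pi> (w ! i)" using i by (simp add: perm_fun_def)
      also have "\<dots> = perm_fun P (w ! i)" using st[rule_format, OF i(1)] stepP'[rule_format, OF i(1)] by (simp only:)
      also have "\<dots> = P ! q" using i by (simp add: perm_fun_def)
      finally show "\<pi> ! q = P ! q" .
    qed
  qed
  show ?thesis
  proof
    show "\<exists>\<pi>. is_perm (n + m) \<pi> \<and> theta \<pi> = w" using pP thP N_def by blast
    show "\<forall>\<pi>. is_perm (n + m) \<pi> \<and> theta \<pi> = w \<longrightarrow> \<pi> \<in> Cyc321 (n + m)"
      using uniq cP nP N_def by (auto simp: Cyc321_def)
  qed
qed


end
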